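(* Let $n$ be a positive integer, $f(x)\mid x^n-1$, and $p(x)\in\mathbb{F}_2[x]$ with $\gcd(p(x),x^n-1)=1$; write $p(x)^{-1}$ for the inverse of $p(x)$ modulo $x^n-1$ and $h(x)=\frac{x^n-1}{f(x)}$. Suppose $r(x),s(x),r'(x),s'(x)\in\mathbb{F}_2[x]$ satisfy $$r(x)+p(x)s(x)\equiv h(x)\pmod{x^n-1},\qquad r'(x)+p(x)^{-1}s'(x)\equiv h(x)\pmod{x^n-1},$$ and let $d$ be the minimum distance of the length-$n$ binary cyclic code generated by $h(x)$. Then the generalized bicycle code defined by $(f(x),p(x)f(x))$ has parameters $[[2n,2\deg(f(x)),d_{GB}]]$ with $$\min\Big\{\frac{(\mathrm{wt}(p)+\mathrm{wt}(p^{-1}))\,d}{m+\mathrm{wt}(p)\,\mathrm{wt}(p^{-1})},\ \frac{d}{m'}\Big\}\ \le\ d_{GB}\ \le\ \min\{\mathrm{wt}(p)+1,\ \mathrm{wt}(p^{-1})+1,\ \mathrm{wt}(s)+\mathrm{wt}(r)\},$$ where $m=\max\{\mathrm{wt}(p),\mathrm{wt}(p^{-1})\}$ and $m'$ may be taken to be either $\max\{\mathrm{wt}(r),\mathrm{wt}(s)\}$ or $\max\{\mathrm{wt}(r'),\mathrm{wt}(s')\}$. Moreover, $C_1\setminus C_2$ contains elements (non-trivial logical operators) of weights $\mathrm{wt}(p)+1$ and $\mathrm{wt}(s)+\mathrm{wt}(r)$.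
   Context: All polynomials are reduced modulo $x^n-1$ (representatives of degree $<n$) before taking weights; $\mathrm{wt}$ is the number of nonzero coefficients. The cyclic code generated by $h(x)$ is the ideal $\langle h(x)\rangle$ of $R_n=\mathbb{F}_2[x]/\langle x^n-1\rangle$, viewed in $\mathbb{F}_2^n$. The generalized bicycle (GB) code defined by $a(x),b(x)\in R_n$ is the CSS code on $2n$ qubits, vectors of $\mathbb{F}_2^{2n}$ being pairs $(u(x),v(x))$, with X-stabilizer space $C_2=\{(ca,cb):c\in R_n\}$, $C_1=\{(u,v):u b+v a=0\text{ in }R_n\}$, Z-stabilizer space $C_2'=\{(c\,b(x^{-1}),c\,a(x^{-1}))\}$ and $C_1'=\{(u,v):u\,a(x^{-1})+v\,b(x^{-1})=0\}$ ($x^{-1}=x^{n-1}$); its dimension is $\dim C_1-\dim C_2$ and its minimum distance $d_{GB}$ is the minimum Hamming weight of an element of $(C_1\setminus C_2)\cup(C_1'\setminus C_2')$. *)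

theory Defs
  imports "HOL-Computational_Algebra.Polynomial" "HOL-Library.Z2" "HOL-Library.Product_Plus"
begin

definition xn1 :: "nat \<Rightarrow> bit poly" where
  "xn1 n = monom 1 n - 1"

definition redn :: "nat \<Rightarrow> bit poly \<Rightarrow> bit poly" where
  "redn n p = p mod xn1 n"

definition wt :: "nat \<Rightarrow> bit poly \<Rightarrow> nat" where
  "wt n p = card {i. coeff (redn n p) i \<noteq> 0}"

definition Rn :: "nat \<Rightarrow> bit poly set" where
  "Rn n = {p. redn n p = p}"

text \<open>p(x^{-1}) in R_n, where x^{-1} = x^{n-1}.\<close>
definition conjx :: "nat \<Rightarrow> bit poly \<Rightarrow> bit poly" where
  "conjx n p = redn n (\<Sum>i<n. monom (coeff (redn n p) i) ((n - i) mod n))"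

definition cyclic_code :: "nat \<Rightarrow> bit poly \<Rightarrow> bit poly set" where
  "cyclic_code n h = {redn n (c * h) | c. True}"

definition min_dist :: "nat \<Rightarrow> bit poly \<Rightarrow> nat" where
  "min_dist n h = Inf {wt n u | u. u \<in> cyclic_code n h \<and> u \<noteq> 0}"

definition GB_C2 :: "nat \<Rightarrow> bit poly \<Rightarrow> bit poly \<Rightarrow> (bit poly \<times> bit poly) set" where
  "GB_C2 n a b = {(redn n (c * a), redn n (c * b)) | c. True}"

definition GB_C1 :: "nat \<Rightarrow> bit poly \<Rightarrow> bit poly \<Rightarrow> (bit poly \<times> bit poly) set" where
  "GB_C1 n a b = {(u, v). u \<in> Rn n \<and> v \<in> Rn n \<and> redn n (u * b + v * a) = 0}"

definition GB_C2' :: "nat \<Rightarrow> bit poly \<Rightarrow> bit poly \<Rightarrow> (bit poly \<times> bit poly) set" where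
  "GB_C2' n a b = {(redn n (c * conjx n b), redn n (c * conjx n a)) | c. True}"

definition GB_C1' :: "nat \<Rightarrow> bit poly \<Rightarrow> bit poly \<Rightarrow> (bit poly \<times> bit poly) set" where
  "GB_C1' n a b = {(u, v). u \<in> Rn n \<and> v \<in> Rn n \<and> redn n (u * conjx n a + v * conjx n b) = 0}"

definition pscale :: "bit \<Rightarrow> bit poly \<times> bit poly \<Rightarrow> bit poly \<times> bit poly" where
  "pscale c w = (smult c (fst w), smult c (snd w))"

definition fdim :: "(bit poly \<times> bit poly) set \<Rightarrow> nat" where
  "fdim S = vector_space.dim pscale S"

definition GB_dim :: "nat \<Rightarrow> bit poly \<Rightarrow> bit poly \<Rightarrow> nat" where
  "GB_dim n a b = fdim (GB_C1 n a b) - fdim (GB_C2 n a b)"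

definition wtv :: "nat \<Rightarrow> bit poly \<times> bit poly \<Rightarrow> nat" where
  "wtv n w = wt n (fst w) + wt n (snd w)"

definition GB_dist :: "nat \<Rightarrow> bit poly \<Rightarrow> bit poly \<Rightarrow> nat" where
  "GB_dist n a b = Inf {wtv n w | w. w \<in> (GB_C1 n a b - GB_C2 n a b) \<union> (GB_C1' n a b - GB_C2' n a b)}"

end

theory Submission
  imports Defs
begin


lemma bitpoly_add_self[simp]: "(a::bit poly) + a = 0"
proof -
  have "\<And>x::bit. x + x = 0" by (case_tac x) auto
  then show ?thesis by (simp only: poly_eq_iff coeff_add coeff_0) simp
qed

lemma bitpoly_minus: "(a::bit poly) - b = a + b"
proof -
  have "- b = b" using bitpoly_add_self[of b] by (rule add.inverse_unique)
  then show ?thesis by (metis diff_conv_add_uminus)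
qed

lemma degree_xn1: "n > 0 \<Longrightarrow> degree (xn1 n) = n"
proof -
  assume n: "n > 0"
  have "degree (- 1 :: bit poly) < degree (monom (1::bit) n)"
    using n by (simp only: degree_minus degree_1 degree_monom_eq one_neq_zero not_False_eq_True)
  then have "degree (monom (1::bit) n + - 1) = degree (monom (1::bit) n)"
    by (rule degree_add_eq_left)
  then show ?thesis unfolding xn1_def diff_conv_add_uminus by (simp only: degree_monom_eq one_neq_zero not_False_eq_True)
qed

lemma xn1_nz: "n > 0 \<Longrightarrow> xn1 n \<noteq> 0"
proof
  assume "n > 0" "xn1 n = 0"
  then show False using degree_xn1[of n] by simp
qed

lemma redn_add: "redn n (a + b) = redn n a + redn n b"
  unfolding redn_def by (simp add: poly_mod_add_left)

lemma redn_0[simp]: "redn n 0 = 0" unfolding redn_def by simp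

lemma redn_redn[simp]: "redn n (redn n a) = redn n a" unfolding redn_def by simp

lemma redn_mult: "redn n (a * b) = redn n (redn n a * redn n b)"
  unfolding redn_def by (simp add: mod_mult_eq)

lemma redn_multL: "redn n (redn n a * b) = redn n (a * b)"
  unfolding redn_def by (simp add: mod_mult_left_eq)
lemma redn_multR: "redn n (a * redn n b) = redn n (a * b)"
  unfolding redn_def by (simp add: mod_mult_right_eq)

lemma redn_eq0: "redn n a = 0 \<longleftrightarrow> xn1 n dvd a"
  unfolding redn_def by (simp add: dvd_eq_mod_eq_0)

lemma redn_eq_iff: "redn n a = redn n b \<longleftrightarrow> xn1 n dvd a + b"
  unfolding redn_def by (simp add: mod_eq_dvd_iff bitpoly_minus)

lemma redn_small: "n > 0 \<Longrightarrow> degree a < n \<Longrightarrow> redn n a = a"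
  unfolding redn_def by (rule mod_poly_less) (simp add: degree_xn1)

lemma redn_smult: "redn n (smult c a) = smult c (redn n a)"
  unfolding redn_def by (simp add: mod_smult_left)

lemma redn_sum: "redn n (sum g A) = (\<Sum>x\<in>A. redn n (g x))"
  by (induction A rule: infinite_finite_induct) (auto simp: redn_add)

lemma degree_redn: "n > 0 \<Longrightarrow> redn n a \<noteq> 0 \<Longrightarrow> degree (redn n a) < n"
  unfolding redn_def using degree_mod_less[of "xn1 n" a] xn1_nz degree_xn1 by auto

lemma coeff_redn_big: "n > 0 \<Longrightarrow> i \<ge> n \<Longrightarrow> coeff (redn n a) i = 0"
proof (cases "redn n a = 0")
  case False
  assume "n > 0" "i \<ge> n"
  then show ?thesis using degree_redn[OF \<open>n>0\<close> False] by (intro coeff_eq_0) simp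
qed simp

lemma xn1_dvd_pow: "xn1 n dvd monom 1 (n*q) - 1"
proof -
  have "(monom 1 n - 1) dvd (monom 1 n) ^ q - (1::bit poly)"
    by (subst power_diff_1_eq) simp
  then show ?thesis by (simp add: xn1_def monom_power)
qed

lemma redn_monom1: "n > 0 \<Longrightarrow> redn n (monom 1 k) = monom 1 (k mod n)"
proof -
  assume n: "n > 0"
  have k: "k = k mod n + n * (k div n)" by simp
  have "monom (1::bit) k - monom 1 (k mod n) = monom 1 (k mod n) * (monom 1 (n * (k div n)) - 1)"
    by (subst k) (simp add: algebra_simps mult_monom)
  then have "xn1 n dvd monom 1 k - monom 1 (k mod n)"
    by (simp add: xn1_dvd_pow)
  then have "redn n (monom 1 k) = redn n (monom 1 (k mod n))"
    by (simp add: redn_def mod_eq_dvd_iff)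
  also have "\<dots> = monom 1 (k mod n)"
    using n by (intro redn_small) (auto simp: degree_monom_eq)
  finally show ?thesis .
qed

lemma redn_monom: assumes "n > 0" shows "redn n (monom c k) = monom c (k mod n)"
proof (cases c)
  case zero then show ?thesis by simp
next
  case one then show ?thesis using redn_monom1 \<open>n > 0\<close> by simp
qed


lemma supp_redn_sub: "n > 0 \<Longrightarrow> {i. coeff (redn n a) i \<noteq> 0} \<subseteq> {..<n}"
proof
  fix x assume "n > 0" "x \<in> {i. coeff (redn n a) i \<noteq> 0}"
  then show "x \<in> {..<n}" using coeff_redn_big[of n x a] by (auto simp: not_less[symmetric])
qed

lemma supp_redn_eq: "n > 0 \<Longrightarrow> {i. coeff (redn n a) i \<noteq> 0} = {i\<in>{..<n}. coeff (redn n a) i \<noteq> 0}"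
  using supp_redn_sub by blast

lemma wt_redn[simp]: "wt n (redn n a) = wt n a"
  unfolding wt_def by simp

lemma wt_eq0: assumes "n > 0" shows "wt n a = 0 \<longleftrightarrow> redn n a = 0"
proof -
  have fin: "finite {i. coeff (redn n a) i \<noteq> 0}"
    using supp_redn_sub[OF assms] finite_subset by blast
  show ?thesis unfolding wt_def using fin by (auto simp: poly_eq_iff)
qed

lemma redn_as_sum: assumes "n > 0" shows "redn n a = (\<Sum>i<n. monom (coeff (redn n a) i) i)"
proof (rule poly_eqI)
  fix j
  show "coeff (redn n a) j = coeff (\<Sum>i<n. monom (coeff (redn n a) i) i) j"
  proof (cases "j < n")
    case True
    have "(\<Sum>i<n. coeff (monom (coeff (redn n a) i) i) j) = (\<Sum>i\<in>{..<n}. if i = j then coeff (redn n a) j else 0)"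
      by (intro sum.cong) (auto simp: coeff_monom)
    also have "\<dots> = coeff (redn n a) j" using True by (simp add: sum.delta')
    finally show ?thesis by (simp add: coeff_sum)
  next
    case False
    then show ?thesis using coeff_redn_big[OF assms, of j a]
      by (auto simp: coeff_sum coeff_monom intro!: sum.neutral)
  qed
qed

lemma supp_sum_monom:
  "{j. coeff (\<Sum>x\<in>A. monom (c x) (e x)) j \<noteq> 0} \<subseteq> e ` {x\<in>A. c x \<noteq> 0}"
proof
  fix j assume j: "j \<in> {j. coeff (\<Sum>x\<in>A. monom (c x) (e x)) j \<noteq> 0}"
  show "j \<in> e ` {x\<in>A. c x \<noteq> 0}"
  proof (rule ccontr)
    assume nj: "j \<notin> e ` {x\<in>A. c x \<noteq> 0}"
    have "coeff (\<Sum>x\<in>A. monom (c x) (e x)) j = (\<Sum>x\<in>A. coeff (monom (c x) (e x)) j)"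
      by (simp add: coeff_sum)
    also have "\<dots> = 0"
      using nj by (intro sum.neutral) (auto simp: coeff_monom)
    finally show False using j by simp
  qed
qed

lemma wt_sum_monom:
  assumes n: "n > 0" and fin: "finite A"
  shows "wt n (\<Sum>x\<in>A. monom (c x) (e x)) \<le> card {x\<in>A. c x \<noteq> 0}"
proof -
  have "redn n (\<Sum>x\<in>A. monom (c x) (e x)) = (\<Sum>x\<in>A. monom (c x) (e x mod n))"
    by (simp add: redn_sum redn_monom[OF n])
  then have "wt n (\<Sum>x\<in>A. monom (c x) (e x)) = card {j. coeff (\<Sum>x\<in>A. monom (c x) (e x mod n)) j \<noteq> 0}"
    by (simp add: wt_def)
  also have "\<dots> \<le> card ((\<lambda>x. e x mod n) ` {x\<in>A. c x \<noteq> 0})"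
    by (intro card_mono supp_sum_monom) (use fin in auto)
  also have "\<dots> \<le> card {x\<in>A. c x \<noteq> 0}" by (rule card_image_le) (use fin in auto)
  finally show ?thesis .
qed

lemma wt_add: assumes n: "n > 0" shows "wt n (a + b) \<le> wt n a + wt n b"
proof -
  have "{i. coeff (redn n (a + b)) i \<noteq> 0} \<subseteq> {i. coeff (redn n a) i \<noteq> 0} \<union> {i. coeff (redn n b) i \<noteq> 0}"
    by (auto simp: redn_add)
  moreover have "finite {i. coeff (redn n a) i \<noteq> 0}" "finite {i. coeff (redn n b) i \<noteq> 0}"
    using supp_redn_sub[OF n] finite_subset by blast+
  ultimately show ?thesis unfolding wt_def
    by (meson card_Un_le card_mono finite_UnI le_trans)
qed

lemma wt_mult: assumes n: "n > 0" shows "wt n (a * b) \<le> wt n a * wt n b"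
proof -
  define ca where "ca = coeff (redn n a)"
  define cb where "cb = coeff (redn n b)"
  have "redn n a * redn n b = (\<Sum>i<n. monom (ca i) i) * (\<Sum>j<n. monom (cb j) j)"
    using redn_as_sum[OF n, of a] redn_as_sum[OF n, of b] ca_def cb_def by simp
  also have "\<dots> = (\<Sum>i<n. \<Sum>j<n. monom (ca i * cb j) (i + j))"
    by (simp add: sum_product mult_monom)
  also have "\<dots> = (\<Sum>x\<in>{..<n} \<times> {..<n}. monom (ca (fst x) * cb (snd x)) (fst x + snd x))"
    by (simp add: sum.cartesian_product case_prod_beta)
  finally have eq: "redn n a * redn n b = (\<Sum>x\<in>{..<n} \<times> {..<n}. monom (ca (fst x) * cb (snd x)) (fst x + snd x))" .
  have "wt n (a * b) = wt n (redn n a * redn n b)"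
    by (metis redn_mult wt_redn)
  also have "\<dots> \<le> card {x\<in>{..<n} \<times> {..<n}. ca (fst x) * cb (snd x) \<noteq> 0}"
    unfolding eq by (rule wt_sum_monom[OF n]) simp
  also have "{x\<in>{..<n} \<times> {..<n}. ca (fst x) * cb (snd x) \<noteq> 0} = {i\<in>{..<n}. ca i \<noteq> 0} \<times> {j\<in>{..<n}. cb j \<noteq> 0}"
    by auto
  also have "card \<dots> = wt n a * wt n b"
    unfolding card_cartesian_product wt_def ca_def cb_def using supp_redn_eq[OF n] by simp
  finally show ?thesis .
qed

lemma wt_1: assumes n: "n > 0" shows "wt n 1 = 1"
proof -
  have "redn n 1 = 1" using n by (intro redn_small) auto
  moreover have "{i. coeff (1::bit poly) i \<noteq> 0} = {0}" by (auto simp: coeff_1)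
  ultimately show ?thesis by (simp add: wt_def)
qed


lemma arith1: assumes "i < (n::nat)" shows "((n - 1) * i) mod n = (n - i) mod n"
proof (cases i)
  case 0 then show ?thesis by simp
next
  case (Suc j)
  have "(n - 1) * i = (n - i) + j * n"
    using assms Suc by (simp add: algebra_simps diff_mult_distrib2)
  then show ?thesis by simp
qed

lemma arith2: assumes "(n::nat) > 0" shows "((n - 1) * (n - 1)) mod n = 1 mod n"
proof (cases n)
  case 0 then show ?thesis using assms by simp
next
  case (Suc k)
  show ?thesis
  proof (cases k)
    case 0 then show ?thesis using Suc by simp
  next
    case (Suc l)
    have "(n - 1) * (n - 1) = 1 + l * n"
      using Suc \<open>n = Suc k\<close> by (simp add: algebra_simps)
    moreover have "(1 + l * n) mod n = 1 mod n" by (rule mod_mult_self1)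
    ultimately show ?thesis by (simp only:)
  qed
qed

lemma pcompose_monom: "pcompose (monom c i) q = smult c (q ^ i)"
proof (induction i)
  case 0 then show ?case by (simp add: monom_0)
next
  case (Suc i)
  have "monom c (Suc i) = [:0,1:] * monom c i" by (simp add: monom_Suc)
  then show ?case using Suc by (simp add: pcompose_mult pcompose_pCons)
qed

lemma ring_aux: "(z::'a::comm_ring_1) * A - z' * B = z * (A - B) + (z - z') * B"
  by (simp add: algebra_simps)

lemma of_bool_bit[simp]: "of_bool (c = (1::bit)) = c"
  by (cases c) auto

lemma pcomp_cong: "(z - z') dvd (pcompose (a::bit poly) z - pcompose a z')"
proof (induction a)
  case 0 then show ?case by simp
next
  case (pCons c a)
  have "pcompose (pCons c a) z - pcompose (pCons c a) z' =
        z * (pcompose a z - pcompose a z') + (z - z') * pcompose a z'"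
    unfolding pcompose_pCons using ring_aux[of z "pcompose a z" z' "pcompose a z'"] by simp
  then show ?case using pCons by simp
qed

definition Yn :: "nat \<Rightarrow> bit poly" where "Yn n = monom 1 (n - 1)"

lemma redn_pcomp_left:
  assumes "redn n a = redn n b" shows "redn n (pcompose a (Yn n)) = redn n (pcompose b (Yn n))"
proof -
  from assms obtain q where q: "a - b = xn1 n * q"
    unfolding redn_eq_iff bitpoly_minus[symmetric] by (auto elim: dvdE)
  have "pcompose a (Yn n) - pcompose b (Yn n) = pcompose (xn1 n) (Yn n) * pcompose q (Yn n)"
    by (simp add: pcompose_diff[symmetric] q pcompose_mult)
  moreover have "pcompose (xn1 n) (Yn n) = monom 1 (n * (n - 1)) - 1"
    by (simp add: xn1_def pcompose_diff pcompose_monom Yn_def monom_power mult.commute pcompose_1)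
  moreover have "xn1 n dvd monom 1 (n * (n - 1)) - 1" by (rule xn1_dvd_pow)
  ultimately have "xn1 n dvd pcompose a (Yn n) - pcompose b (Yn n)" by simp
  then show ?thesis unfolding redn_eq_iff bitpoly_minus[symmetric] .
qed

lemma redn_pcomp_right:
  assumes "redn n z = redn n z'" shows "redn n (pcompose a z) = redn n (pcompose a z')"
proof -
  have "xn1 n dvd z - z'" using assms unfolding redn_eq_iff bitpoly_minus .
  then have "xn1 n dvd pcompose a z - pcompose a z'" using pcomp_cong dvd_trans by blast
  then show ?thesis unfolding redn_eq_iff bitpoly_minus[symmetric] .
qed

lemma conjx_pc: assumes n: "n > 0" shows "conjx n a = redn n (pcompose a (Yn n))"
proof -
  define ca where "ca = coeff (redn n a)"
  have "conjx n a = (\<Sum>i<n. monom (ca i) (((n - i) mod n) mod n))"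
    unfolding conjx_def ca_def by (simp add: redn_sum redn_monom[OF n])
  also have "\<dots> = (\<Sum>i<n. monom (ca i) (((n - 1) * i) mod n))"
  proof (intro sum.cong refl)
    fix i assume "i \<in> {..<n}"
    then have "((n - 1) * i) mod n = (n - i) mod n" by (intro arith1) simp
    then show "monom (ca i) (((n - i) mod n) mod n) = monom (ca i) (((n - 1) * i) mod n)" by simp
  qed
  also have "\<dots> = redn n (pcompose (redn n a) (Yn n))"
  proof -
    have "pcompose (redn n a) (Yn n) = pcompose (\<Sum>i<n. monom (ca i) i) (Yn n)"
      using redn_as_sum[OF n, of a] ca_def by simp
    also have "\<dots> = (\<Sum>i<n. monom (ca i) ((n - 1) * i))"
      by (simp add: pcompose_sum pcompose_monom Yn_def monom_power smult_monom mult.commute)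
    finally show ?thesis by (simp add: redn_sum redn_monom[OF n])
  qed
  also have "\<dots> = redn n (pcompose a (Yn n))"
    by (rule redn_pcomp_left) simp
  finally show ?thesis .
qed

lemma conjx_redn[simp]: "conjx n (redn n a) = conjx n a"
  unfolding conjx_def by simp

lemma redn_conjx[simp]: "redn n (conjx n a) = conjx n a"
  unfolding conjx_def by simp

lemma conjx_add: assumes n: "n > 0" shows "conjx n (a + b) = conjx n a + conjx n b"
  by (simp add: conjx_pc[OF n] pcompose_add redn_add)

lemma conjx_mult: assumes n: "n > 0" shows "conjx n (a * b) = redn n (conjx n a * conjx n b)"
  by (simp add: conjx_pc[OF n] pcompose_mult redn_mult[of n "pcompose a _"])

lemma conjx_0[simp]: "conjx n 0 = 0"
  unfolding conjx_def by simp

lemma conjx_conjx: assumes n: "n > 0" shows "conjx n (conjx n a) = redn n a"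
proof -
  have "conjx n (conjx n a) = redn n (pcompose (pcompose a (Yn n)) (Yn n))"
    unfolding conjx_pc[OF n] by (rule redn_pcomp_left) simp
  also have "\<dots> = redn n (pcompose a (pcompose (Yn n) (Yn n)))"
    by (simp add: pcompose_assoc)
  also have "\<dots> = redn n (pcompose a [:0,1:])"
  proof (rule redn_pcomp_right)
    have "pcompose (Yn n) (Yn n) = monom 1 ((n - 1) * (n - 1))"
      by (simp add: Yn_def pcompose_monom monom_power mult.commute)
    then have "redn n (pcompose (Yn n) (Yn n)) = monom 1 (((n - 1) * (n - 1)) mod n)"
      by (simp only: redn_monom[OF n])
    also have "\<dots> = monom 1 (1 mod n)" by (simp only: arith2[OF n])
    also have "\<dots> = redn n (monom 1 1)" by (simp add: redn_monom[OF n])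
    moreover have "monom (1::bit) 1 = [:0, 1:]"
      by (rule poly_eqI) (simp add: coeff_monom coeff_pCons split: nat.split)
    ultimately show "redn n (pcompose (Yn n) (Yn n)) = redn n [:0, 1:]" by simp
  qed
  finally show ?thesis by simp
qed

lemma conjx_1: assumes n: "n > 0" shows "conjx n 1 = 1"
proof -
  have "conjx n 1 = redn n 1" unfolding conjx_pc[OF n] pcompose_1 ..
  then show ?thesis using n by (simp add: redn_small)
qed

lemma wt_conjx_le: assumes n: "n > 0" shows "wt n (conjx n a) \<le> wt n a"
proof -
  have "wt n (conjx n a) = wt n (\<Sum>i<n. monom (coeff (redn n a) i) ((n - i) mod n))"
    unfolding conjx_def by simp
  also have "\<dots> \<le> card {i\<in>{..<n}. coeff (redn n a) i \<noteq> 0}"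
    by (rule wt_sum_monom[OF n]) simp
  also have "\<dots> = wt n a" unfolding wt_def using supp_redn_eq[OF n] by simp
  finally show ?thesis .
qed

lemma wt_conjx: assumes n: "n > 0" shows "wt n (conjx n a) = wt n a"
  using wt_conjx_le[OF n, of a] wt_conjx_le[OF n, of "conjx n a"] conjx_conjx[OF n, of a] by simp


lemma bit_add_eq0: "(x::bit poly) + y = 0 \<Longrightarrow> y = x"
  by (metis add_diff_cancel_left' bitpoly_minus diff_self bitpoly_add_self)

locale gbs =
  fixes n :: nat and f p pinv :: "bit poly"
  assumes n: "n > 0" and fdvd: "f dvd xn1 n" and fdeg: "degree f > 0"
    and pinv: "redn n (p * pinv) = 1"
begin

definition "h = xn1 n div f"

lemma fh: "f * h = xn1 n" unfolding h_def using fdvd by simp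

lemma f_nz: "f \<noteq> 0" using fdeg by auto

lemma h_nz: "h \<noteq> 0" using fh xn1_nz[OF n] by auto

lemma deg_fh: "degree f + degree h = n"
  using fh degree_mult_eq[OF f_nz h_nz] degree_xn1[OF n] by simp

lemma redn_h: "redn n h = h"
  using deg_fh fdeg n by (intro redn_small) auto

lemma redn_hf: "redn n (c * h * f) = 0"
proof -
  have "c * h * f = c * xn1 n" using fh by (metis mult.assoc mult.commute)
  then show ?thesis unfolding redn_eq0 by (metis dvd_triv_right)
qed

lemma h_dvd: assumes "redn n (w * f) = 0" shows "h dvd w"
proof -
  have "h * f dvd w * f" using assms fh by (simp add: redn_eq0 ac_simps)
  then show ?thesis using f_nz by simp
qed

lemma f_not_unit: "\<not> f dvd 1"
  using is_unit_iff_degree[OF f_nz] fdeg by simp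

lemma redn_f_not1: "redn n (c * f) \<noteq> 1"
proof
  assume "redn n (c * f) = 1"
  then have "redn n (c * f) = redn n 1" using n by (simp add: redn_small)
  then have "xn1 n dvd c * f + 1" by (simp add: redn_eq_iff)
  then have "f dvd c * f + 1" using fdvd dvd_trans by blast
  then have "f dvd 1" by (simp add: dvd_add_right_iff)
  then show False using f_not_unit by simp
qed

lemma redn_pinv_mult: "redn n (x * p * pinv) = redn n x"
proof -
  have "redn n (x * p * pinv) = redn n (x * redn n (p * pinv))" by (simp add: redn_multR ac_simps)
  then show ?thesis using pinv by simp
qed

definition "d = min_dist n h"

lemma d_le: assumes "redn n (c * h) \<noteq> 0" shows "d \<le> wt n (redn n (c * h))"
proof -
  have "wt n (redn n (c * h)) \<in> {wt n u | u. u \<in> cyclic_code n h \<and> u \<noteq> 0}"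
    using assms unfolding cyclic_code_def by blast
  then show ?thesis unfolding d_def min_dist_def by (rule cInf_lower) simp
qed

lemma d_le': assumes "redn n w \<noteq> 0" "h dvd w" shows "d \<le> wt n w"
proof -
  from assms obtain c where "w = h * c" by (auto elim: dvdE)
  then show ?thesis using d_le[of c] assms by (simp add: ac_simps)
qed

abbreviation "C1 \<equiv> GB_C1 n f (p * f)"
abbreviation "C2 \<equiv> GB_C2 n f (p * f)"

lemma C1_iff: "(u, v) \<in> C1 \<longleftrightarrow> redn n u = u \<and> redn n v = v \<and> redn n ((u * p + v) * f) = 0"
  unfolding GB_C1_def Rn_def by (auto simp: algebra_simps)

lemma C1_h: assumes "(u, v) \<in> C1" shows "h dvd u * p + v"
  using assms C1_iff h_dvd by blast

lemma LB_nz: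
  assumes uv: "(u, v) \<in> C1" and z: "redn n (u * p + v) \<noteq> 0"
  shows "(wt n p + wt n pinv) * d \<le> (wt n u + wt n v) * (max (wt n p) (wt n pinv) + wt n p * wt n pinv)"
proof -
  define a where "a = wt n u"
  define b where "b = wt n v"
  define P where "P = wt n p"
  define Q where "Q = wt n pinv"
  have hd: "h dvd u * p + v" using C1_h[OF uv] .
  have d1: "d \<le> a * P + b"
  proof -
    have "d \<le> wt n (u * p + v)" using d_le'[OF z hd] .
    also have "\<dots> \<le> wt n (u * p) + wt n v" by (rule wt_add[OF n])
    also have "\<dots> \<le> a * P + b" using wt_mult[OF n, of u p] a_def b_def P_def by simp
    finally show ?thesis .
  qed
  have d2: "d \<le> a + b * Q"
  proof -
    have eqw: "redn n (pinv * (u * p + v)) = redn n (u + v * pinv)"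
      using redn_pinv_mult[of u] by (simp add: algebra_simps redn_add)
    have nz: "redn n (pinv * (u * p + v)) \<noteq> 0"
    proof
      assume "redn n (pinv * (u * p + v)) = 0"
      then have "redn n (p * redn n (pinv * (u * p + v))) = 0" by simp
      then have "redn n ((u * p + v) * p * pinv) = 0" by (simp add: redn_multR ac_simps)
      then show False using z redn_pinv_mult by simp
    qed
    have "d \<le> wt n (pinv * (u * p + v))" using d_le'[OF nz] hd by simp
    also have "\<dots> = wt n (u + v * pinv)" by (metis eqw wt_redn)
    also have "\<dots> \<le> wt n u + wt n (v * pinv)" by (rule wt_add[OF n])
    also have "\<dots> \<le> a + b * Q" using wt_mult[OF n, of v pinv] a_def b_def Q_def by simp
    finally show ?thesis .
  qed
  have "(P + Q) * d = Q * d + P * d" by (simp add: algebra_simps)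
  also have "\<dots> \<le> Q * (a * P + b) + P * (a + b * Q)"
    using d1 d2 by (intro add_mono mult_left_mono) auto
  also have "\<dots> = a * (P * Q) + b * (P * Q) + (Q * b + P * a)" by (simp add: algebra_simps)
  also have "\<dots> \<le> a * (P * Q) + b * (P * Q) + (max P Q * b + max P Q * a)"
    by (intro add_left_mono add_mono mult_right_mono) auto
  also have "\<dots> = (a + b) * (max P Q + P * Q)" by (simp add: algebra_simps)
  finally show ?thesis unfolding a_def b_def P_def Q_def .
qed

lemma z_case:
  assumes uv: "(u, v) \<in> C1 - C2" and z: "redn n (u * p + v) = 0"
  shows "v = redn n (u * p)" "redn n (u * h) \<noteq> 0"
proof -
  have u: "redn n u = u" and v: "redn n v = v" using uv C1_iff by auto
  have "redn n (u * p) + v = 0" using z v by (simp add: redn_add)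
  then show vv: "v = redn n (u * p)" by (rule bit_add_eq0)
  show "redn n (u * h) \<noteq> 0"
  proof
    assume "redn n (u * h) = 0"
    then have "f * h dvd u * h" using fh by (simp add: redn_eq0)
    then have "f dvd u" using h_nz by simp
    then obtain c where "u = f * c" by (rule dvdE)
    then have c: "u = c * f" by (simp add: ac_simps)
    have "(u, v) = (redn n (c * f), redn n (c * (p * f)))"
      using u vv c by (simp add: ac_simps)
    then have "(u, v) \<in> C2" unfolding GB_C2_def by blast
    then show False using uv by simp
  qed
qed

lemma LB_z1:
  assumes uv: "(u, v) \<in> C1 - C2" and z: "redn n (u * p + v) = 0"
    and rs: "redn n (r + p * s) = redn n h"
  shows "d \<le> (wt n u + wt n v) * max (wt n r) (wt n s)"
proof -
  have vv: "v = redn n (u * p)" and nz: "redn n (u * h) \<noteq> 0" using z_case[OF uv z] by auto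
  have "d \<le> wt n (redn n (u * h))" using d_le[of u] nz by (simp add: ac_simps)
  also have "redn n (u * h) = redn n (u * r + (u * p) * s)"
    using rs redn_multR[of n u h] redn_multR[of n u "r + p * s"] by (simp add: algebra_simps)
  also have "wt n (redn n (u * r + (u * p) * s)) \<le> wt n (u * r) + wt n ((u * p) * s)"
    using wt_add[OF n] by simp
  also have "\<dots> \<le> wt n u * wt n r + wt n (u * p) * wt n s"
    using wt_mult[OF n] by (intro add_mono) auto
  also have "wt n (u * p) = wt n v" using vv by simp
  also have "wt n u * wt n r + wt n v * wt n s \<le> wt n u * max (wt n r) (wt n s) + wt n v * max (wt n r) (wt n s)"
    by (intro add_mono mult_left_mono) auto
  also have "\<dots> = (wt n u + wt n v) * max (wt n r) (wt n s)" by (simp add: algebra_simps)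
  finally show ?thesis .
qed

lemma LB_z2:
  assumes uv: "(u, v) \<in> C1 - C2" and z: "redn n (u * p + v) = 0"
    and rs: "redn n (r + pinv * s) = redn n h"
  shows "d \<le> (wt n u + wt n v) * max (wt n r) (wt n s)"
proof -
  have vv: "v = redn n (u * p)" and nz0: "redn n (u * h) \<noteq> 0" using z_case[OF uv z] by auto
  have nz: "redn n (v * h) \<noteq> 0"
  proof
    assume "redn n (v * h) = 0"
    then have "redn n (u * p * h) = 0" using vv redn_multL[of n "u * p" h] by simp
    then have "redn n (pinv * redn n (u * p * h)) = 0" by simp
    then have "redn n (u * h * p * pinv) = 0" by (simp add: redn_multR ac_simps)
    then show False using nz0 redn_pinv_mult by simp
  qed
  have vp: "redn n (v * pinv) = redn n u"
    using vv redn_multL[of n "u * p" pinv] redn_pinv_mult[of u] by simp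
  have "d \<le> wt n (redn n (v * h))" using d_le[of v] nz by (simp add: ac_simps)
  also have "redn n (v * h) = redn n (v * r + (v * pinv) * s)"
    using rs redn_multR[of n v h] redn_multR[of n v "r + pinv * s"] by (simp add: algebra_simps)
  also have "wt n (redn n (v * r + (v * pinv) * s)) \<le> wt n (v * r) + wt n ((v * pinv) * s)"
    using wt_add[OF n] by simp
  also have "\<dots> \<le> wt n v * wt n r + wt n (v * pinv) * wt n s"
    using wt_mult[OF n] by (intro add_mono) auto
  also have "wt n (v * pinv) = wt n u" using vp by (metis wt_redn)
  also have "wt n v * wt n r + wt n u * wt n s \<le> wt n v * max (wt n r) (wt n s) + wt n u * max (wt n r) (wt n s)"
    by (intro add_mono mult_left_mono) auto
  also have "\<dots> = (wt n u + wt n v) * max (wt n r) (wt n s)" by (simp add: algebra_simps)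
  finally show ?thesis .
qed

end


context gbs begin

abbreviation "C1' \<equiv> GB_C1' n f (p * f)"
abbreviation "C2' \<equiv> GB_C2' n f (p * f)"

lemma conj_C1:
  assumes uv: "(u, v) \<in> C1' - C2'"
  shows "(conjx n v, conjx n u) \<in> C1 - C2" "wtv n (conjx n v, conjx n u) = wtv n (u, v)"
proof -
  have u: "redn n u = u" and v: "redn n v = v"
    and e: "redn n (u * conjx n f + v * conjx n (p * f)) = 0"
    using uv unfolding GB_C1'_def Rn_def by auto
  have "0 = conjx n (redn n (u * conjx n f + v * conjx n (p * f)))" using e by simp
  also have "\<dots> = conjx n (u * conjx n f) + conjx n (v * conjx n (p * f))"
    by (simp add: conjx_add[OF n])
  also have "\<dots> = redn n (conjx n u * redn n f) + redn n (conjx n v * redn n (p * f))"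
    by (simp only: conjx_mult[OF n, of u "conjx n f"] conjx_mult[OF n, of v "conjx n (p * f)"] conjx_conjx[OF n])
  also have "\<dots> = redn n (conjx n v * (p * f) + conjx n u * f)"
    by (simp only: redn_multR redn_add add.commute)
  finally have "redn n (conjx n v * (p * f) + conjx n u * f) = 0" by simp
  then have in1: "(conjx n v, conjx n u) \<in> C1"
    unfolding GB_C1_def Rn_def by simp
  have nin2: "(conjx n v, conjx n u) \<notin> C2"
  proof
    assume "(conjx n v, conjx n u) \<in> C2"
    then obtain c where cv: "conjx n v = redn n (c * f)" and cu: "conjx n u = redn n (c * (p * f))"
      unfolding GB_C2_def by auto
    have "u = conjx n (conjx n u)" using conjx_conjx[OF n, of u] u by simp
    also have "\<dots> = redn n (conjx n c * conjx n (p * f))" using cu by (simp add: conjx_mult[OF n])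
    finally have uu: "u = redn n (conjx n c * conjx n (p * f))" .
    have "v = conjx n (conjx n v)" using conjx_conjx[OF n, of v] v by simp
    also have "\<dots> = redn n (conjx n c * conjx n f)" using cv by (simp add: conjx_mult[OF n])
    finally have vv: "v = redn n (conjx n c * conjx n f)" .
    have "(u, v) \<in> C2'" unfolding GB_C2'_def using uu vv by blast
    then show False using uv by simp
  qed
  show "(conjx n v, conjx n u) \<in> C1 - C2" using in1 nin2 by simp
  show "wtv n (conjx n v, conjx n u) = wtv n (u, v)"
    unfolding wtv_def by (simp add: wt_conjx[OF n])
qed

lemma LB_real:
  assumes uv: "(u, v) \<in> C1 - C2"
    and zc: "redn n (u * p + v) = 0 \<Longrightarrow> d \<le> (wt n u + wt n v) * M"
  shows "min (real ((wt n p + wt n pinv) * d) / real (max (wt n p) (wt n pinv) + wt n p * wt n pinv))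
             (real d / real M) \<le> real (wtv n (u, v))"
proof (cases "redn n (u * p + v) = 0")
  case True
  have le: "real d \<le> real (wt n u + wt n v) * real M" using zc[OF True] by (simp only: of_nat_mult[symmetric] of_nat_le_iff)
  have "real d / real M \<le> real (wt n u + wt n v)"
  proof (cases "M = 0")
    case False then show ?thesis using le by (simp add: divide_le_eq)
  qed simp
  then show ?thesis unfolding wtv_def by simp
next
  case False
  define K where "K = max (wt n p) (wt n pinv) + wt n p * wt n pinv"
  have le: "real ((wt n p + wt n pinv) * d) \<le> real (wt n u + wt n v) * real K"
    using LB_nz[of u v] uv False unfolding K_def by (simp only: of_nat_mult[symmetric] of_nat_le_iff) simp
  have "real ((wt n p + wt n pinv) * d) / real K \<le> real (wt n u + wt n v)"
  proof (cases "K = 0")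
    case False then show ?thesis using le by (simp add: divide_le_eq)
  qed simp
  then show ?thesis unfolding wtv_def K_def by simp
qed

lemma E1: "(1, redn n p) \<in> C1 - C2" "wtv n (1, redn n p) = wt n p + 1"
proof -
  have r1: "redn n 1 = 1" using n by (simp add: redn_small)
  have "redn n ((1 * p + redn n p) * f) = redn n (p * f) + redn n (redn n p * f)"
    by (simp only: distrib_right mult_1_left redn_add)
  also have "\<dots> = 0" by (simp only: redn_multL bitpoly_add_self)
  finally have "(1, redn n p) \<in> C1" unfolding C1_iff using r1 by simp
  moreover have "(1, redn n p) \<notin> C2" unfolding GB_C2_def using redn_f_not1 by fastforce
  ultimately show "(1, redn n p) \<in> C1 - C2" by simp
  show "wtv n (1, redn n p) = wt n p + 1" unfolding wtv_def using wt_1[OF n] by simp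
qed

lemma E2: "(redn n pinv, 1) \<in> C1 - C2" "wtv n (redn n pinv, 1) = wt n pinv + 1"
proof -
  have r1: "redn n 1 = 1" using n by (simp add: redn_small)
  have e1: "redn n ((redn n pinv * p + 1) * f) = redn n (redn n pinv * (p * f)) + redn n f"
    by (simp only: distrib_right mult_1_left redn_add mult.assoc)
  have "redn n (redn n pinv * (p * f)) = redn n (f * p * pinv)"
    by (simp only: redn_multL) (simp add: ac_simps)
  also have "\<dots> = redn n f" by (rule redn_pinv_mult)
  finally have "redn n ((redn n pinv * p + 1) * f) = 0" using e1 by simp
  then have "(redn n pinv, 1) \<in> C1" unfolding C1_iff using r1 by simp
  moreover have "(redn n pinv, 1) \<notin> C2" unfolding GB_C2_def
    using redn_f_not1[of "c * p" for c] by (fastforce simp: ac_simps)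
  ultimately show "(redn n pinv, 1) \<in> C1 - C2" by simp
  show "wtv n (redn n pinv, 1) = wt n pinv + 1" unfolding wtv_def using wt_1[OF n] by simp
qed

lemma E3:
  assumes rs: "redn n (r + p * s) = redn n h"
  shows "(redn n s, redn n r) \<in> C1 - C2" "wtv n (redn n s, redn n r) = wt n s + wt n r"
proof -
  have "redn n ((redn n s * p + redn n r) * f) = redn n (redn n s * (p * f)) + redn n (redn n r * f)"
    by (simp only: distrib_right redn_add mult.assoc)
  also have "\<dots> = redn n (s * (p * f)) + redn n (r * f)" by (simp only: redn_multL)
  also have "\<dots> = redn n ((r + p * s) * f)" by (simp add: redn_add algebra_simps)
  also have "\<dots> = redn n (redn n (r + p * s) * f)" by (simp only: redn_multL)
  also have "\<dots> = redn n (1 * h * f)" using rs by (simp add: redn_multL)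
  also have "\<dots> = 0" by (rule redn_hf)
  finally have "(redn n s, redn n r) \<in> C1" unfolding C1_iff by simp
  moreover have "(redn n s, redn n r) \<notin> C2"
  proof
    assume "(redn n s, redn n r) \<in> C2"
    then obtain c where cs: "redn n s = redn n (c * f)" and cr: "redn n r = redn n (c * (p * f))"
      unfolding GB_C2_def by auto
    have "redn n (r + p * s) = redn n r + redn n (p * redn n s)" by (simp add: redn_add redn_multR)
    also have "\<dots> = redn n (c * (p * f)) + redn n (p * (c * f))" using cs cr by (simp add: redn_multR)
    also have "\<dots> = 0" by (simp add: ac_simps)
    finally have "h = 0" using rs redn_h by simp
    then show False using h_nz by simp
  qed
  ultimately show "(redn n s, redn n r) \<in> C1 - C2" by simp
  show "wtv n (redn n s, redn n r) = wt n s + wt n r" unfolding wtv_def by simp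
qed

end


context gbs begin

definition "X = real ((wt n p + wt n pinv) * d) / real (max (wt n p) (wt n pinv) + wt n p * wt n pinv)"

lemma LB_C1C2:
  assumes w: "w \<in> C1 - C2"
    and M: "\<And>u v. (u, v) \<in> C1 - C2 \<Longrightarrow> redn n (u * p + v) = 0 \<Longrightarrow> d \<le> (wt n u + wt n v) * M"
  shows "min X (real d / real M) \<le> real (wtv n w)"
proof -
  obtain u v where w': "w = (u, v)" by fastforce
  show ?thesis unfolding w' X_def
    by (rule LB_real) (use w w' M in auto)
qed

lemma dist_attained:
  obtains w where "w \<in> (C1 - C2) \<union> (C1' - C2')" "GB_dist n f (p * f) = wtv n w"
proof -
  let ?S = "{wtv n w | w. w \<in> (C1 - C2) \<union> (C1' - C2')}"
  have "?S \<noteq> {}" using E1 by blast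
  then have "Inf ?S \<in> ?S" by (rule Inf_nat_def1)
  then show ?thesis using that unfolding GB_dist_def by blast
qed

lemma dist_le: assumes "w \<in> (C1 - C2) \<union> (C1' - C2')" shows "GB_dist n f (p * f) \<le> wtv n w"
proof -
  have "wtv n w \<in> {wtv n w | w. w \<in> (C1 - C2) \<union> (C1' - C2')}" using assms by blast
  then show ?thesis unfolding GB_dist_def by (rule cInf_lower) simp
qed

lemma LB_dist:
  assumes M: "\<And>u v. (u, v) \<in> C1 - C2 \<Longrightarrow> redn n (u * p + v) = 0 \<Longrightarrow> d \<le> (wt n u + wt n v) * M"
  shows "min X (real d / real M) \<le> real (GB_dist n f (p * f))"
proof -
  obtain w where w: "w \<in> (C1 - C2) \<union> (C1' - C2')" "GB_dist n f (p * f) = wtv n w"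
    by (rule dist_attained)
  show ?thesis
  proof (cases "w \<in> C1 - C2")
    case True
    then show ?thesis using LB_C1C2[OF True M] w by simp
  next
    case False
    then have w1: "w \<in> C1' - C2'" using w by blast
    obtain u v where w': "w = (u, v)" by fastforce
    have "min X (real d / real M) \<le> real (wtv n (conjx n v, conjx n u))"
      by (rule LB_C1C2[OF _ M]) (use conj_C1 w1 w' in auto)
    then show ?thesis using conj_C1(2) w1 w' w by simp
  qed
qed

lemma LB1: assumes "redn n (r + p * s) = redn n h"
  shows "min X (real d / real (max (wt n r) (wt n s))) \<le> real (GB_dist n f (p * f))"
  by (rule LB_dist) (rule LB_z1[OF _ _ assms])

lemma LB2: assumes "redn n (r + pinv * s) = redn n h"
  shows "min X (real d / real (max (wt n r) (wt n s))) \<le> real (GB_dist n f (p * f))"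
  by (rule LB_dist) (rule LB_z2[OF _ _ assms])

lemma UB: assumes "redn n (r + p * s) = redn n h"
  shows "GB_dist n f (p * f) \<le> min (wt n p + 1) (min (wt n pinv + 1) (wt n s + wt n r))"
  using dist_le[of "(1, redn n p)"] dist_le[of "(redn n pinv, 1)"] dist_le[of "(redn n s, redn n r)"]
    E1 E2 E3[OF assms] by auto

end


interpretation PV: vector_space pscale
  by unfold_locales (auto simp: pscale_def smult_add_right smult_add_left)

lemma fdim_PV: "fdim S = PV.dim S" unfolding fdim_def ..

lemma poly_sum_K: assumes "\<And>i. i \<ge> K \<Longrightarrow> coeff c i = 0"
  shows "c = (\<Sum>i<K. monom (coeff c i) i)"
proof (rule poly_eqI)
  fix j
  show "coeff c j = coeff (\<Sum>i<K. monom (coeff c i) i) j"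
  proof (cases "j < K")
    case True
    have "(\<Sum>i<K. coeff (monom (coeff c i) i) j) = (\<Sum>i\<in>{..<K}. if i = j then coeff c j else 0)"
      by (intro sum.cong) (auto simp: coeff_monom)
    also have "\<dots> = coeff c j" using True by (simp add: sum.delta')
    finally show ?thesis by (simp add: coeff_sum)
  next
    case False
    then show ?thesis using assms[of j]
      by (auto simp: coeff_sum coeff_monom intro!: sum.neutral)
  qed
qed

lemma sum_monom_coeff: assumes "(\<Sum>i<K. monom (\<phi> i) i) = 0" "j < K" shows "\<phi> j = 0"
proof -
  have "coeff (\<Sum>i<K. monom (\<phi> i) i) j = (\<Sum>i\<in>{..<K}. if i = j then \<phi> j else 0)"
    unfolding coeff_sum by (intro sum.cong) (auto simp: coeff_monom)
  also have "\<dots> = \<phi> j" using assms(2) by (simp add: sum.delta')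
  finally show ?thesis using assms(1) by simp
qed

lemma smult_monom_term: "smult c (monom 1 i * (A::bit poly)) = monom c i * A"
proof -
  have "monom c i = smult c (monom 1 i)" by (cases c) simp_all
  then show ?thesis by simp
qed

lemma sum_smult_monom: "(\<Sum>i<K. smult (\<phi> i) (monom 1 i * (A::bit poly))) = (\<Sum>i<K. monom (\<phi> i) i) * A"
  by (simp add: sum_distrib_right smult_monom_term)

lemma redn_lin: "redn n (c * A) = (\<Sum>i<K. smult (coeff c i) (redn n (monom 1 i * A)))"
  if "\<And>i. i \<ge> K \<Longrightarrow> coeff c i = 0"
proof -
  have "redn n (c * A) = redn n ((\<Sum>i<K. monom (coeff c i) i) * A)"
    using poly_sum_K[OF that] by simp
  also have "\<dots> = redn n (\<Sum>i<K. smult (coeff c i) (monom 1 i * A))"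
    by (simp add: sum_smult_monom)
  also have "\<dots> = (\<Sum>i<K. smult (coeff c i) (redn n (monom 1 i * A)))"
    by (simp add: redn_sum redn_smult)
  finally show ?thesis .
qed

lemma pscale_sum_fst: "fst (\<Sum>i\<in>A. pscale (\<phi> i) (g i)) = (\<Sum>i\<in>A. smult (\<phi> i) (fst (g i)))"
  by (simp add: fst_sum pscale_def)
lemma pscale_sum_snd: "snd (\<Sum>i\<in>A. pscale (\<phi> i) (g i)) = (\<Sum>i\<in>A. smult (\<phi> i) (snd (g i)))"
  by (simp add: snd_sum pscale_def)

context gbs begin

definition "g2 i = (redn n (monom 1 i * f), redn n (monom 1 i * (p * f)))"
definition "B2 = g2 ` {..<degree h}"

lemma g2_fst: "i < degree h \<Longrightarrow> fst (g2 i) = monom 1 i * f"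
proof -
  assume i: "i < degree h"
  have "degree (monom (1::bit) i * f) = i + degree f" using f_nz by (simp add: degree_mult_eq degree_monom_eq)
  then have "degree (monom (1::bit) i * f) < n" using i deg_fh by simp
  then show ?thesis unfolding g2_def fst_conv using n by (intro redn_small) auto
qed

lemma inj_g2: "inj_on g2 {..<degree h}"
proof
  fix i j assume ij: "i \<in> {..<degree h}" "j \<in> {..<degree h}" "g2 i = g2 j"
  then have "monom 1 i * f = monom 1 j * f" using g2_fst by (metis lessThan_iff)
  then have "monom (1::bit) i = monom 1 j" using f_nz by simp
  then show "i = j" by (metis monom_eq_iff' one_neq_zero)
qed

lemma B2_sub: "B2 \<subseteq> C2"
  unfolding B2_def g2_def GB_C2_def by blast

lemma C2_span: "C2 \<subseteq> PV.span B2"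
proof
  fix w assume "w \<in> C2"
  then obtain c where w: "w = (redn n (c * f), redn n (c * (p * f)))" unfolding GB_C2_def by blast
  define c' where "c' = c mod h"
  have cc: "c = h * (c div h) + c'" unfolding c'_def by simp
  have "c * A + c' * A = h * (c div h) * A + (c' * A + c' * A)" for A
    by (subst cc) (simp only: distrib_right add.assoc)
  then have ee: "c * A + c' * A = (c div h * A) * h" for A by (simp add: ac_simps)
  have e1: "redn n (c * f) = redn n (c' * f)"
    unfolding redn_eq_iff ee using fh by (metis dvd_triv_right mult.assoc mult.commute)
  have e2: "redn n (c * (p * f)) = redn n (c' * (p * f))"
    unfolding redn_eq_iff ee using fh by (metis dvd_triv_right mult.assoc mult.commute)
  have cz: "coeff c' i = 0" if "i \<ge> degree h" for i
  proof (cases "c' = 0")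
    case False
    then have "degree c' < degree h" unfolding c'_def using degree_mod_less[of h c] h_nz by auto
    then show ?thesis using that by (intro coeff_eq_0) simp
  qed simp
  have "w = (\<Sum>i<degree h. pscale (coeff c' i) (g2 i))"
    unfolding w e1 e2 prod_eq_iff pscale_sum_fst pscale_sum_snd
    by (simp add: g2_def redn_lin[OF cz])
  also have "\<dots> \<in> PV.span B2"
    by (intro PV.span_sum PV.span_scale PV.span_base) (simp add: B2_def)
  finally show "w \<in> PV.span B2" .
qed

lemma B2_indep: "PV.independent B2"
proof (rule PV.independent_if_scalars_zero)
  show "finite B2" unfolding B2_def by simp
next
  fix \<phi> x assume s: "(\<Sum>x\<in>B2. pscale (\<phi> x) x) = 0" and x: "x \<in> B2"
  have "(\<Sum>i<degree h. pscale (\<phi> (g2 i)) (g2 i)) = 0"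
    using s unfolding B2_def by (simp add: sum.reindex[OF inj_g2])
  then have "fst (\<Sum>i<degree h. pscale (\<phi> (g2 i)) (g2 i)) = 0" by simp
  then have "(\<Sum>i<degree h. smult (\<phi> (g2 i)) (monom 1 i * f)) = 0"
    unfolding pscale_sum_fst by (simp add: g2_fst)
  then have "(\<Sum>i<degree h. monom (\<phi> (g2 i)) i) = 0"
    unfolding sum_smult_monom using f_nz by simp
  moreover obtain i where "i < degree h" "x = g2 i" using x unfolding B2_def by auto
  ultimately show "\<phi> x = 0" using sum_monom_coeff[of "\<lambda>i. \<phi> (g2 i)"] by blast
qed

lemma dim_C2: "fdim C2 = degree h"
proof -
  have "card B2 = PV.dim C2" by (rule PV.basis_card_eq_dim[OF B2_sub C2_span B2_indep])
  moreover have "card B2 = degree h" unfolding B2_def using inj_g2 by (simp add: card_image)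
  ultimately show ?thesis by (simp add: fdim_PV)
qed

end


context gbs begin

definition "g1 i = (monom (1::bit) i, redn n (monom 1 i * p))"
definition "g3 j = (0::bit poly, monom 1 j * h)"
definition "B1 = g1 ` {..<n} \<union> g3 ` {..<degree f}"

lemma inj_g1: "inj_on g1 {..<n}"
  by (rule inj_onI) (auto simp: g1_def monom_eq_iff')

lemma g3_red: "j < degree f \<Longrightarrow> redn n (monom 1 j * h) = monom 1 j * h"
proof -
  assume j: "j < degree f"
  have "degree (monom (1::bit) j * h) = j + degree h" using h_nz by (simp add: degree_mult_eq degree_monom_eq)
  then have "degree (monom (1::bit) j * h) < n" using j deg_fh by simp
  then show ?thesis using n by (intro redn_small) auto
qed

lemma inj_g3: "inj_on g3 {..<degree f}"
proof (rule inj_onI)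
  fix i j assume "g3 i = g3 j"
  then have "monom (1::bit) i * h = monom 1 j * h" by (simp add: g3_def)
  then have "monom (1::bit) i = monom 1 j" using h_nz by simp
  then show "i = j" by (simp add: monom_eq_iff')
qed

lemma disj13: "g1 ` {..<n} \<inter> g3 ` {..<degree f} = {}"
  by (auto simp: g1_def g3_def)

lemma B1_sub: "B1 \<subseteq> C1"
proof
  fix x assume "x \<in> B1"
  then consider (a) i where "i < n" "x = g1 i" | (b) j where "j < degree f" "x = g3 j"
    unfolding B1_def by auto
  then show "x \<in> C1"
  proof cases
    case a
    have r: "redn n (monom 1 i) = monom (1::bit) i" using a n by (intro redn_small) (auto simp: degree_monom_eq)
    have "redn n ((monom 1 i * p + redn n (monom 1 i * p)) * f) = redn n (monom 1 i * p * f) + redn n (redn n (monom 1 i * p) * f)"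
      by (simp only: distrib_right redn_add)
    also have "\<dots> = 0" by (simp only: redn_multL bitpoly_add_self)
    finally show ?thesis unfolding a(2) g1_def C1_iff using r by simp
  next
    case b
    have "redn n ((0 * p + monom 1 j * h) * f) = 0" using redn_hf[of "monom 1 j"] by simp
    then show ?thesis unfolding b(2) g3_def C1_iff using g3_red[OF b(1)] by simp
  qed
qed

lemma C1_span: "C1 \<subseteq> PV.span B1"
proof
  fix w assume w: "w \<in> C1"
  obtain u v where uv: "w = (u, v)" by fastforce
  have u: "redn n u = u" and v: "redn n v = v" and e: "redn n ((u * p + v) * f) = 0"
    using w uv C1_iff by auto
  define z where "z = v + redn n (u * p)"
  have "redn n (z * f) = redn n (v * f) + redn n (redn n (u * p) * f)"
    unfolding z_def by (simp only: distrib_right redn_add)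
  also have "\<dots> = redn n ((u * p + v) * f)"
    by (simp only: redn_multL) (simp add: redn_add algebra_simps)
  finally have "redn n (z * f) = 0" using e by simp
  then have "h dvd z" by (rule h_dvd)
  then obtain q where q: "z = h * q" by (rule dvdE)
  have zr: "redn n z = z" unfolding z_def using v by (simp add: redn_add)
  have qz: "coeff q j = 0" if "j \<ge> degree f" for j
  proof (cases "q = 0")
    case False
    then have "z \<noteq> 0" using q h_nz by simp
    then have "degree z < n" using degree_redn[OF n, of z] zr by simp
    then have "degree h + degree q < n" using q h_nz False by (simp add: degree_mult_eq)
    then have "degree q < degree f" using deg_fh by simp
    then show ?thesis using that by (intro coeff_eq_0) simp
  qed simp
  have uz: "coeff u i = 0" if "i \<ge> n" for i using coeff_redn_big[OF n that, of u] u by simp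
  have s1: "(\<Sum>i<n. pscale (coeff u i) (g1 i)) = (u, redn n (u * p))"
  proof -
    have "fst (\<Sum>i<n. pscale (coeff u i) (g1 i)) = u"
      unfolding pscale_sum_fst g1_def fst_conv using poly_sum_K[OF uz]
      by (simp add: smult_monom_term[where A=1, simplified])
    moreover have "snd (\<Sum>i<n. pscale (coeff u i) (g1 i)) = redn n (u * p)"
      unfolding pscale_sum_snd g1_def snd_conv using redn_lin[OF uz] by simp
    ultimately show ?thesis by (simp add: prod_eq_iff)
  qed
  have s3: "(\<Sum>j<degree f. pscale (coeff q j) (g3 j)) = (0, z)"
  proof -
    have "fst (\<Sum>j<degree f. pscale (coeff q j) (g3 j)) = 0"
      unfolding pscale_sum_fst g3_def by simp
    moreover have "snd (\<Sum>j<degree f. pscale (coeff q j) (g3 j)) = z"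
      unfolding pscale_sum_snd g3_def snd_conv sum_smult_monom using poly_sum_K[OF qz] q
      by (simp add: ac_simps)
    ultimately show ?thesis by (simp add: prod_eq_iff)
  qed
  have "w = (\<Sum>i<n. pscale (coeff u i) (g1 i)) + (\<Sum>j<degree f. pscale (coeff q j) (g3 j))"
  proof -
    have "redn n (u * p) + (v + redn n (u * p)) = v + (redn n (u * p) + redn n (u * p))"
      by (rule add.left_commute)
    then have "redn n (u * p) + (v + redn n (u * p)) = v" by simp
    then show ?thesis unfolding s1 s3 uv z_def by simp
  qed
  also have "\<dots> \<in> PV.span B1"
    by (intro PV.span_add PV.span_sum PV.span_scale PV.span_base) (auto simp: B1_def)
  finally show "w \<in> PV.span B1" .
qed

lemma B1_indep: "PV.independent B1"
proof (rule PV.independent_if_scalars_zero)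
  show "finite B1" unfolding B1_def by simp
next
  fix \<phi> x assume s: "(\<Sum>x\<in>B1. pscale (\<phi> x) x) = 0" and x: "x \<in> B1"
  have "(\<Sum>x\<in>B1. pscale (\<phi> x) x) = (\<Sum>x\<in>g1 ` {..<n}. pscale (\<phi> x) x) + (\<Sum>x\<in>g3 ` {..<degree f}. pscale (\<phi> x) x)"
    unfolding B1_def by (rule sum.union_disjoint) (use disj13 in auto)
  also have "\<dots> = (\<Sum>i<n. pscale (\<phi> (g1 i)) (g1 i)) + (\<Sum>j<degree f. pscale (\<phi> (g3 j)) (g3 j))"
    by (simp add: sum.reindex[OF inj_g1] sum.reindex[OF inj_g3])
  finally have s': "(\<Sum>i<n. pscale (\<phi> (g1 i)) (g1 i)) + (\<Sum>j<degree f. pscale (\<phi> (g3 j)) (g3 j)) = 0"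
    using s by simp
  have "fst (\<Sum>i<n. pscale (\<phi> (g1 i)) (g1 i)) + fst (\<Sum>j<degree f. pscale (\<phi> (g3 j)) (g3 j)) = 0"
    using arg_cong[OF s', of fst] by simp
  then have "(\<Sum>i<n. monom (\<phi> (g1 i)) i) = 0"
    unfolding pscale_sum_fst g1_def g3_def fst_conv
    by (simp add: smult_monom_term[where A=1, simplified])
  then have z1: "\<phi> (g1 i) = 0" if "i < n" for i using sum_monom_coeff[of "\<lambda>i. \<phi> (g1 i)" n i] that by blast
  have "snd (\<Sum>i<n. pscale (\<phi> (g1 i)) (g1 i)) + snd (\<Sum>j<degree f. pscale (\<phi> (g3 j)) (g3 j)) = 0"
    using arg_cong[OF s', of snd] by simp
  then have "(\<Sum>j<degree f. monom (\<phi> (g3 j)) j) * h = 0"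
    unfolding pscale_sum_snd using z1 by (simp add: g3_def sum_smult_monom)
  then have "(\<Sum>j<degree f. monom (\<phi> (g3 j)) j) = 0" using h_nz by simp
  then have z3: "\<phi> (g3 j) = 0" if "j < degree f" for j using sum_monom_coeff[of "\<lambda>j. \<phi> (g3 j)" "degree f" j] that by blast
  show "\<phi> x = 0" using x z1 z3 unfolding B1_def by auto
qed

lemma dim_C1: "fdim C1 = n + degree f"
proof -
  have "card B1 = PV.dim C1" by (rule PV.basis_card_eq_dim[OF B1_sub C1_span B1_indep])
  moreover have "card B1 = n + degree f" unfolding B1_def
    using inj_g1 inj_g3 disj13 by (simp add: card_Un_disjoint card_image)
  ultimately show ?thesis by (simp add: fdim_PV)
qed

lemma GB_dim_eq: "GB_dim n f (p * f) = 2 * degree f"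
  unfolding GB_dim_def dim_C1 dim_C2 using deg_fh by simp

end


theorem theorem3:
  fixes n :: nat and f p pinv r s r' s' :: "bit poly"
  assumes n: "n > 0"
    and fdvd: "f dvd xn1 n"
    and fdeg: "degree f > 0"
    and cop: "coprime p (xn1 n)"
    and pinv: "redn n (p * pinv) = 1"
    and rs: "redn n (r + p * s) = redn n (xn1 n div f)"
    and rs': "redn n (r' + pinv * s') = redn n (xn1 n div f)"
  defines "d \<equiv> min_dist n (xn1 n div f)"
    and "m \<equiv> max (wt n p) (wt n pinv)"
    and "dGB \<equiv> GB_dist n f (p * f)"
  shows "(GB_dim n f (p * f) = 2 * degree f) \<and>
    (min (real ((wt n p + wt n pinv) * d) / real (m + wt n p * wt n pinv))
             (real d / real (max (wt n r) (wt n s))) \<le> real dGB) \<and>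
    (min (real ((wt n p + wt n pinv) * d) / real (m + wt n p * wt n pinv))
             (real d / real (max (wt n r') (wt n s'))) \<le> real dGB) \<and>
    (dGB \<le> min (wt n p + 1) (min (wt n pinv + 1) (wt n s + wt n r))) \<and>
    (\<exists>w \<in> GB_C1 n f (p * f) - GB_C2 n f (p * f). wtv n w = wt n p + 1) \<and>
    (\<exists>w \<in> GB_C1 n f (p * f) - GB_C2 n f (p * f). wtv n w = wt n s + wt n r)"
proof -
  interpret G: gbs n f p pinv using n fdvd fdeg pinv by unfold_locales
  have rsh: "redn n (r + p * s) = redn n G.h" using rs unfolding G.h_def .
  have rsh': "redn n (r' + pinv * s') = redn n G.h" using rs' unfolding G.h_def .
  have dd: "d = G.d" unfolding d_def G.d_def G.h_def ..
  have X: "G.X = real ((wt n p + wt n pinv) * d) / real (m + wt n p * wt n pinv)"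
    unfolding G.X_def dd m_def ..
  show ?thesis
  proof (intro conjI)
    show "GB_dim n f (p * f) = 2 * degree f" by (rule G.GB_dim_eq)
    show "min (real ((wt n p + wt n pinv) * d) / real (m + wt n p * wt n pinv))
             (real d / real (max (wt n r) (wt n s))) \<le> real dGB"
      using G.LB1[OF rsh] unfolding X dd dGB_def .
    show "min (real ((wt n p + wt n pinv) * d) / real (m + wt n p * wt n pinv))
             (real d / real (max (wt n r') (wt n s'))) \<le> real dGB"
      using G.LB2[OF rsh'] unfolding X dd dGB_def .
    show "dGB \<le> min (wt n p + 1) (min (wt n pinv + 1) (wt n s + wt n r))"
      unfolding dGB_def by (rule G.UB[OF rsh])
    show "\<exists>w \<in> GB_C1 n f (p * f) - GB_C2 n f (p * f). wtv n w = wt n p + 1"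
      using G.E1 by blast
    show "\<exists>w \<in> GB_C1 n f (p * f) - GB_C2 n f (p * f). wtv n w = wt n s + wt n r"
      using G.E3[OF rsh] by blast
  qed
qed

end
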